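(* Let $\Phi$ be a strict Young function, $A\in GL(d,\mathbf R)$ and $a\in S^0_{1,0}(\mathbf R^{2d})$. Then $\mathrm{Op}_A(a)$ is continuous $L^\Phi(\mathbf R^d)\to L^\Phi(\mathbf R^d)$ and $wL^\Phi(\mathbf R^d)\to wL^\Phi(\mathbf R^d)$.
   Context: A Young function is a map $\Phi:[0,\infty)\to[0,\infty]$ which is convex, satisfies $\Phi(0)=0$ and $\lim_{t\to\infty}\Phi(t)=+\infty$. $\Phi$ satisfies the $\Delta_2$-condition if there is $C\ge1$ with $\Phi(2t)\le C\Phi(t)$ for all $t\ge0$; it satisfies the $\Lambda$-condition if there is $p>1$ with $\Phi(ct)\le c^p\Phi(t)$ for all $t\ge0$, $c\in(0,1]$. A Young function is strict if it is finite-valued on $[0,\infty)$ and satisfies both the $\Delta_2$- and the $\Lambda$-condition. $L^\Phi(\mathbf R^d)$ is the set of measurable $f$ with $\|f\|_{L^\Phi}=\inf\{\lambda>0:\int\Phi(|f|/\lambda)\,dx\le1\}<\infty$; with $\mu_f(t)=|\{x:|f(x)|>t\}|$, $wL^\Phi(\mathbf R^d)$ is the set of measurable $f$ with $\|f\|_{wL^\Phi}=\inf\{\lambda>0:\sup_{t>0}\Phi(t/\lambda)\mu_f(t)\le1\}<\infty$. $S^0_{1,0}(\mathbf R^{2d})$ is the set of $a\in C^\infty(\mathbf R^{2d})$ with $\sup_{x,\xi}\langle\xi\rangle^{|\alpha|}|D_\xi^\alpha D_x^\beta a(x,\xi)|<\infty$ for all multi-indices $\alpha,\beta$, where $\langle\xi\rangle=(1+|\xi|^2)^{1/2}$.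 For $f\in\mathscr S(\mathbf R^d)$, $\mathrm{Op}_A(a)f(x)=(2\pi)^{-d}\iint a(x-A(x-y),\xi)f(y)e^{i\langle x-y,\xi\rangle}\,dy\,d\xi$. This operator extends uniquely to a bounded operator on every $L^p$, $1<p<\infty$, hence to $L^{p_0}+L^{p_1}$ for $1<p_0<p_1<\infty$; the claim concerns this extension ($L^\Phi$ and $wL^\Phi$ lie in such sums for suitable $p_0,p_1$), and continuity means $\|\mathrm{Op}_A(a)f\|_{L^\Phi}\lesssim\|f\|_{L^\Phi}$ and $\|\mathrm{Op}_A(a)f\|_{wL^\Phi}\lesssim\|f\|_{wL^\Phi}$. *)

theory Defs
  imports "HOL-Analysis.Analysis"
begin

definition young_fun :: "(real \<Rightarrow> ennreal) \<Rightarrow> bool" where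
  "young_fun \<Phi> \<longleftrightarrow> \<Phi> 0 = 0 \<and>
     (\<forall>s\<ge>0. \<forall>t\<ge>0. \<forall>l\<in>{0..1}.
        \<Phi> ((1 - l) * s + l * t) \<le> ennreal (1 - l) * \<Phi> s + ennreal l * \<Phi> t) \<and>
     (\<Phi> \<longlongrightarrow> \<infinity>) at_top"

definition delta2_cond :: "(real \<Rightarrow> ennreal) \<Rightarrow> bool" where
  "delta2_cond \<Phi> \<longleftrightarrow> (\<exists>C\<ge>1. \<forall>t\<ge>0. \<Phi> (2 * t) \<le> ennreal C * \<Phi> t)"

definition lambda_cond :: "(real \<Rightarrow> ennreal) \<Rightarrow> bool" where
  "lambda_cond \<Phi> \<longleftrightarrow> (\<exists>p>1. \<forall>t\<ge>0. \<forall>c. 0 < c \<and> c \<le> 1 \<longrightarrow>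
      \<Phi> (c * t) \<le> ennreal (c powr p) * \<Phi> t)"

definition strict_young :: "(real \<Rightarrow> ennreal) \<Rightarrow> bool" where
  "strict_young \<Phi> \<longleftrightarrow> young_fun \<Phi> \<and> (\<forall>t\<ge>0. \<Phi> t < \<infinity>) \<and>
     delta2_cond \<Phi> \<and> lambda_cond \<Phi>"

definition orlicz_norm :: "(real \<Rightarrow> ennreal) \<Rightarrow> (real^'n \<Rightarrow> complex) \<Rightarrow> ennreal" where
  "orlicz_norm \<Phi> f = Inf {ennreal l | l. l > 0 \<and>
      (\<integral>\<^sup>+ x. \<Phi> (cmod (f x) / l) \<partial>lebesgue) \<le> 1}"

definition orlicz_space :: "(real \<Rightarrow> ennreal) \<Rightarrow> (real^'n \<Rightarrow> complex) set" where
  "orlicz_space \<Phi> = {f. f \<in> borel_measurable lebesgue \<and> orlicz_norm \<Phi> f < \<infinity>}"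

definition distrib_fun :: "(real^'n \<Rightarrow> complex) \<Rightarrow> real \<Rightarrow> ennreal" where
  "distrib_fun f t = emeasure lebesgue {x. cmod (f x) > t}"

definition weak_orlicz_norm :: "(real \<Rightarrow> ennreal) \<Rightarrow> (real^'n \<Rightarrow> complex) \<Rightarrow> ennreal" where
  "weak_orlicz_norm \<Phi> f = Inf {ennreal l | l. l > 0 \<and>
      (\<forall>t>0. \<Phi> (t / l) * distrib_fun f t \<le> 1)}"

definition weak_orlicz_space :: "(real \<Rightarrow> ennreal) \<Rightarrow> (real^'n \<Rightarrow> complex) set" where
  "weak_orlicz_space \<Phi> = {f. f \<in> borel_measurable lebesgue \<and> weak_orlicz_norm \<Phi> f < \<infinity>}"

definition pd :: "'a::euclidean_space \<Rightarrow> ('a \<Rightarrow> complex) \<Rightarrow> 'a \<Rightarrow> complex" where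
  "pd b g x = vector_derivative (\<lambda>t. g (x + t *\<^sub>R b)) (at 0)"

fun iter_pd :: "'a::euclidean_space list \<Rightarrow> ('a \<Rightarrow> complex) \<Rightarrow> 'a \<Rightarrow> complex" where
  "iter_pd [] g = g"
| "iter_pd (b # bs) g = pd b (iter_pd bs g)"

definition smooth_fun :: "('a::euclidean_space \<Rightarrow> complex) \<Rightarrow> bool" where
  "smooth_fun g \<longleftrightarrow> (\<forall>bs. set bs \<subseteq> Basis \<longrightarrow>
      continuous_on UNIV (iter_pd bs g) \<and>
      (\<forall>b\<in>Basis. \<forall>x. (\<lambda>t. iter_pd bs g (x + t *\<^sub>R b)) differentiable (at 0)))"

definition schwartz :: "(real^'n \<Rightarrow> complex) \<Rightarrow> bool" where
  "schwartz f \<longleftrightarrow> smooth_fun f \<and>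
     (\<forall>bs. set bs \<subseteq> Basis \<longrightarrow> (\<forall>N::nat. \<exists>C. \<forall>x. (1 + norm x) ^ N * cmod (iter_pd bs f x) \<le> C))"

text \<open>Symbols on R^{2d} = R^d x R^d (first component x, second xi). A basis direction
  of the product is a xi-direction iff its first component is 0; the length of the
  multi-index alpha equals the number of xi-directions in the list.\<close>
definition symbol_S0 :: "((real^'n) \<times> (real^'n) \<Rightarrow> complex) set" where
  "symbol_S0 = {a. smooth_fun a \<and>
     (\<forall>bs. set bs \<subseteq> Basis \<longrightarrow> (\<exists>C. \<forall>x \<xi>.
        (1 + (norm \<xi>)\<^sup>2) powr (real (length (filter (\<lambda>b. fst b = 0) bs)) / 2)
          * cmod (iter_pd bs a (x, \<xi>)) \<le> C))}"

definition op_A :: "real^'n^'n \<Rightarrow> ((real^'n) \<times> (real^'n) \<Rightarrow> complex) \<Rightarrow>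
    (real^'n \<Rightarrow> complex) \<Rightarrow> real^'n \<Rightarrow> complex" where
  "op_A A a f x = complex_of_real ((2 * pi) powr (- real CARD('n))) *
     (\<integral>\<xi>. (\<integral>y. a (x - A *v (x - y), \<xi>) * f y * cis ((x - y) \<bullet> \<xi>) \<partial>lborel) \<partial>lborel)"

definition in_Lp :: "real \<Rightarrow> (real^'n \<Rightarrow> complex) \<Rightarrow> bool" where
  "in_Lp p f \<longleftrightarrow> f \<in> borel_measurable lebesgue \<and> integrable lebesgue (\<lambda>x. cmod (f x) powr p)"

text \<open>T is (a representative of) the unique extension of Op_A(a) from Schwartz functions
  to a bounded operator on every L^p, 1<p<\<infinity>, extended additively to sums L^p + L^q.\<close>
definition is_Op_extension :: "real^'n^'n \<Rightarrow> ((real^'n) \<times> (real^'n) \<Rightarrow> complex) \<Rightarrow>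
    ((real^'n \<Rightarrow> complex) \<Rightarrow> (real^'n \<Rightarrow> complex)) \<Rightarrow> bool" where
  "is_Op_extension A a T \<longleftrightarrow>
     (\<forall>f. schwartz f \<longrightarrow> (AE x in lebesgue. T f x = op_A A a f x)) \<and>
     (\<forall>p>1. \<exists>C. \<forall>f. in_Lp p f \<longrightarrow> in_Lp p (T f) \<and>
          (\<integral>x. cmod (T f x) powr p \<partial>lebesgue) \<le> C * (\<integral>x. cmod (f x) powr p \<partial>lebesgue)) \<and>
     (\<forall>p q f g. 1 < p \<longrightarrow> 1 < q \<longrightarrow> in_Lp p f \<longrightarrow> in_Lp q g \<longrightarrow>
          (AE x in lebesgue. T (\<lambda>y. f y + g y) x = T f x + T g x))"

end

theory Submission imports Defs begin


lemma geom_nat_bound: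
  fixes h :: "nat \<Rightarrow> ennreal"
  assumes "\<And>i. h i \<le> ennreal (c * r ^ i)" "0 \<le> r" "r < 1" "c \<ge> 0"
  shows "(\<Sum>i. h i) \<le> ennreal (c / (1 - r))"
proof -
  have "(\<Sum>i. h i) \<le> (\<Sum>i. ennreal (c * r ^ i))"
    using assms(1) by (intro suminf_le) auto
  also have "\<dots> = ennreal (c * (1 / (1 - r)))"
    using assms by (intro suminf_ennreal_eq sums_mult geometric_sums) auto
  finally show ?thesis by simp
qed

lemma int_geom_up:
  fixes g :: "int \<Rightarrow> ennreal"
  assumes z: "\<And>k. k < m \<Longrightarrow> g k = 0"
    and b: "\<And>k. k \<ge> m \<Longrightarrow> g k \<le> ennreal (c * r ^ nat (k - m))"
    and "0 \<le> r" "r < 1" "c \<ge> 0"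
  shows "(\<integral>\<^sup>+k. g k \<partial>count_space UNIV) \<le> ennreal (c / (1 - r))"
proof -
  have "(\<integral>\<^sup>+k. g k \<partial>count_space UNIV) = (\<integral>\<^sup>+k. g k \<partial>count_space {m..})"
    using z by (intro nn_integral_count_space_eq) auto
  also have "\<dots> = (\<integral>\<^sup>+i. g (m + int i) \<partial>count_space UNIV)"
  proof (rule nn_integral_bij_count_space[symmetric])
    show "bij_betw (\<lambda>i::nat. m + int i) UNIV {m..}"
      by (rule bij_betwI[where g="\<lambda>k. nat (k - m)"]) auto
  qed
  also have "\<dots> = (\<Sum>i. g (m + int i))" by (rule nn_integral_count_space_nat)
  also have "\<dots> \<le> ennreal (c / (1 - r))"
    using assms by (intro geom_nat_bound) (auto intro: order_trans[OF b])
  finally show ?thesis .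
qed

lemma int_geom_down:
  fixes g :: "int \<Rightarrow> ennreal"
  assumes z: "\<And>k. k > m \<Longrightarrow> g k = 0"
    and b: "\<And>k. k \<le> m \<Longrightarrow> g k \<le> ennreal (c * r ^ nat (m - k))"
    and "0 \<le> r" "r < 1" "c \<ge> 0"
  shows "(\<integral>\<^sup>+k. g k \<partial>count_space UNIV) \<le> ennreal (c / (1 - r))"
proof -
  have "(\<integral>\<^sup>+k. g k \<partial>count_space UNIV) = (\<integral>\<^sup>+k. g k \<partial>count_space {..m})"
    using z by (intro nn_integral_count_space_eq) auto
  also have "\<dots> = (\<integral>\<^sup>+i. g (m - int i) \<partial>count_space UNIV)"
  proof (rule nn_integral_bij_count_space[symmetric])
    show "bij_betw (\<lambda>i::nat. m - int i) UNIV {..m}"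
      by (rule bij_betwI[where g="\<lambda>k. nat (m - k)"]) auto
  qed
  also have "\<dots> = (\<Sum>i. g (m - int i))" by (rule nn_integral_count_space_nat)
  also have "\<dots> \<le> ennreal (c / (1 - r))"
    using assms by (intro geom_nat_bound) (auto intro: order_trans[OF b])
  finally show ?thesis .
qed


definition pw :: "int \<Rightarrow> real" where "pw k = 2 powr (real_of_int k)"

lemma pw_pos[simp]: "pw k > 0" by (simp add: pw_def)

lemma pw_less_iff: "v > 0 \<Longrightarrow> pw k < v \<longleftrightarrow> k < \<lceil>log 2 v\<rceil>"
  by (simp add: pw_def less_log_iff[symmetric] less_ceiling_iff)

lemma pw_mult: "pw (k + j) = pw k * pw j"
  by (simp add: pw_def powr_add)

lemma pw_div: "pw k / pw j = pw (k - j)"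
  by (simp add: pw_def powr_diff)

lemma pw_powr: "pw k powr e = (2 powr e) powr (real_of_int k)"
  by (simp add: pw_def powr_powr mult.commute)

lemma pw_nat: "k \<ge> 0 \<Longrightarrow> pw k = 2 ^ nat k"
  by (simp add: pw_def powr_realpow[symmetric])

lemma powr_int_nat: "x > 0 \<Longrightarrow> k \<ge> 0 \<Longrightarrow> x powr (real_of_int k) = x ^ nat k"
  by (simp add: powr_realpow[symmetric])

lemma inLp_nn:
  fixes h :: "real^'n \<Rightarrow> complex"
  assumes h: "in_Lp P h" and c: "c \<ge> 0" and r: "r > 0"
  shows "(\<integral>\<^sup>+x. ennreal (c * (cmod (h x) / r) powr P) \<partial>lebesgue)
       = ennreal (c * r powr (- P)) * ennreal (\<integral>x. cmod (h x) powr P \<partial>lebesgue)"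
proof -
  have m: "h \<in> borel_measurable lebesgue" and i: "integrable lebesgue (\<lambda>x. cmod (h x) powr P)"
    using h by (auto simp: in_Lp_def)
  have "(\<integral>\<^sup>+x. ennreal (c * (cmod (h x) / r) powr P) \<partial>lebesgue)
      = (\<integral>\<^sup>+x. ennreal (c * r powr (- P)) * ennreal (cmod (h x) powr P) \<partial>lebesgue)"
    using c r by (intro nn_integral_cong) (simp add: powr_divide powr_minus ennreal_mult[symmetric] mult.assoc divide_inverse powr_mult inverse_powr)
  also have "\<dots> = ennreal (c * r powr (- P)) * (\<integral>\<^sup>+x. ennreal (cmod (h x) powr P) \<partial>lebesgue)"
    using m by (intro nn_integral_cmult) measurable
  also have "(\<integral>\<^sup>+x. ennreal (cmod (h x) powr P) \<partial>lebesgue) = ennreal (\<integral>x. cmod (h x) powr P \<partial>lebesgue)"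
    using i by (intro nn_integral_eq_integral) auto
  finally show ?thesis .
qed

lemma opbound:
  fixes T :: "(real^'n \<Rightarrow> complex) \<Rightarrow> (real^'n \<Rightarrow> complex)"
  assumes hT: "\<And>f. in_Lp P f \<Longrightarrow> in_Lp P (T f) \<and> (\<integral>x. cmod (T f x) powr P \<partial>lebesgue) \<le> C * (\<integral>x. cmod (f x) powr P \<partial>lebesgue)"
    and g: "in_Lp P g" and C: "C \<ge> 0" and c: "c \<ge> 0" and r: "r > 0"
  shows "(\<integral>\<^sup>+x. ennreal (c * (cmod (T g x) / r) powr P) \<partial>lebesgue)
      \<le> ennreal C * (\<integral>\<^sup>+x. ennreal (c * (cmod (g x) / r) powr P) \<partial>lebesgue)"
proof -
  have Tg: "in_Lp P (T g)" and le: "(\<integral>x. cmod (T g x) powr P \<partial>lebesgue) \<le> C * (\<integral>x. cmod (g x) powr P \<partial>lebesgue)"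
    using hT[OF g] by auto
  have "(\<integral>\<^sup>+x. ennreal (c * (cmod (T g x) / r) powr P) \<partial>lebesgue)
      = ennreal (c * r powr (- P)) * ennreal (\<integral>x. cmod (T g x) powr P \<partial>lebesgue)"
    by (rule inLp_nn[OF Tg c r])
  also have "\<dots> \<le> ennreal (c * r powr (- P)) * ennreal (C * (\<integral>x. cmod (g x) powr P \<partial>lebesgue))"
    by (intro mult_left_mono ennreal_leI le) auto
  also have "\<dots> = ennreal C * (ennreal (c * r powr (- P)) * ennreal (\<integral>x. cmod (g x) powr P \<partial>lebesgue))"
    using C by (simp add: ennreal_mult' mult_ac)
  also have "\<dots> = ennreal C * (\<integral>\<^sup>+x. ennreal (c * (cmod (g x) / r) powr P) \<partial>lebesgue)"
    by (simp add: inLp_nn[OF g c r])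
  finally show ?thesis .
qed

lemma inLp_of_bound:
  fixes g :: "real^'n \<Rightarrow> complex"
  assumes gm: "g \<in> borel_measurable lebesgue" and b: "\<And>x. cmod (g x) powr P \<le> c * \<psi> x"
    and \<psi>m: "\<psi> \<in> borel_measurable lebesgue" and \<psi>i: "(\<integral>\<^sup>+x. ennreal (\<psi> x) \<partial>lebesgue) < \<infinity>"
    and c: "c \<ge> 0"
  shows "in_Lp P g"
  unfolding in_Lp_def
proof (intro conjI gm)
  have "(\<integral>\<^sup>+x. ennreal (norm (cmod (g x) powr P)) \<partial>lebesgue) \<le> (\<integral>\<^sup>+x. ennreal c * ennreal (\<psi> x) \<partial>lebesgue)"
  proof (intro nn_integral_mono)
    fix x
    have "ennreal (norm (cmod (g x) powr P)) \<le> ennreal (c * \<psi> x)" using b[of x] by (intro ennreal_leI) simp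
    also have "\<dots> = ennreal c * ennreal (\<psi> x)"
    proof (cases "\<psi> x \<ge> 0")
      case True then show ?thesis using c by (simp add: ennreal_mult)
    next
      case False then show ?thesis using c by (simp add: ennreal_neg mult_nonneg_nonpos)
    qed
    finally show "ennreal (norm (cmod (g x) powr P)) \<le> ennreal c * ennreal (\<psi> x)" .
  qed
  also have "\<dots> = ennreal c * (\<integral>\<^sup>+x. ennreal (\<psi> x) \<partial>lebesgue)"
    using \<psi>m by (intro nn_integral_cmult) measurable
  also have "\<dots> < \<infinity>" using \<psi>i by (simp add: ennreal_mult_less_top)
  finally show "integrable lebesgue (\<lambda>x. cmod (g x) powr P)"
    using gm by (subst integrable_iff_bounded) auto
qed

lemma meas_gt:
  fixes g :: "real^'n \<Rightarrow> complex"
  assumes gm: "g \<in> borel_measurable lebesgue"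
  shows "{x. s < cmod (g x)} \<in> sets lebesgue"
proof -
  have "{x. s < cmod (g x)} = {x \<in> space lebesgue. s < cmod (g x)}" by simp
  also have "\<dots> \<in> sets lebesgue" using gm by measurable
  finally show ?thesis .
qed

lemma layer_bound:
  fixes h :: "real^'n \<Rightarrow> real" and a :: "nat \<Rightarrow> real"
  assumes pt: "\<And>x. ennreal (h x) \<le> (\<integral>\<^sup>+k. ennreal (a k) * indicator (A k) x \<partial>count_space UNIV)"
    and As: "\<And>k. A k \<in> sets lebesgue"
    and ab: "\<And>k. ennreal (a k) * emeasure lebesgue (A k) \<le> ennreal (c * r ^ k)"
    and "0 \<le> r" "r < 1" "c \<ge> 0"
  shows "(\<integral>\<^sup>+x. ennreal (h x) \<partial>lebesgue) \<le> ennreal (c / (1 - r))"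
proof -
  have "(\<integral>\<^sup>+x. ennreal (h x) \<partial>lebesgue)
      \<le> (\<integral>\<^sup>+x. \<integral>\<^sup>+k. ennreal (a k) * indicator (A k) x \<partial>count_space UNIV \<partial>lebesgue)"
    by (intro nn_integral_mono pt)
  also have "\<dots> = (\<integral>\<^sup>+k. \<integral>\<^sup>+x. ennreal (a k) * indicator (A k) x \<partial>lebesgue \<partial>count_space UNIV)"
    using As by (intro nn_integral_count_space_nn_integral) auto
  also have "\<dots> = (\<integral>\<^sup>+k. ennreal (a k) * emeasure lebesgue (A k) \<partial>count_space UNIV)"
    using As by (intro nn_integral_cong nn_integral_cmult_indicator) auto
  also have "\<dots> = (\<Sum>k. ennreal (a k) * emeasure lebesgue (A k))"
    by (rule nn_integral_count_space_nat)
  also have "\<dots> \<le> ennreal (c / (1 - r))"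
    using assms by (intro geom_nat_bound) auto
  finally show ?thesis .
qed

lemma chebyshev_pow:
  fixes g :: "real^'n \<Rightarrow> complex"
  assumes gm: "g \<in> borel_measurable lebesgue" and s: "s > 0" and P: "P > 0"
  shows "emeasure lebesgue {x. s < cmod (g x)} \<le> (\<integral>\<^sup>+x. ennreal (1 * (cmod (g x) / s) powr P) \<partial>lebesgue)"
proof -
  have "emeasure lebesgue {x. s < cmod (g x)} = (\<integral>\<^sup>+x. indicator {x. s < cmod (g x)} x \<partial>lebesgue)"
    using meas_gt[OF gm] by (subst nn_integral_indicator) auto
  also have "\<dots> \<le> (\<integral>\<^sup>+x. ennreal (1 * (cmod (g x) / s) powr P) \<partial>lebesgue)"
  proof (intro nn_integral_mono)
    fix x show "indicator {x. s < cmod (g x)} x \<le> ennreal (1 * (cmod (g x) / s) powr P)"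
      using s P by (auto simp: indicator_def intro!: ge_one_powr_ge_zero)
  qed
  finally show ?thesis .
qed

lemma Inf_scale:
  fixes P Q :: "real \<Rightarrow> bool"
  assumes PQ: "\<And>l. l > 0 \<Longrightarrow> P l \<Longrightarrow> Q (M * l)" and M: "M > 0"
  shows "Inf {ennreal l |l. l > 0 \<and> Q l} \<le> ennreal M * Inf {ennreal l |l. l > 0 \<and> P l}"
proof -
  define x where "x = Inf {ennreal l |l. l > 0 \<and> Q l}"
  have "x / ennreal M \<le> Inf {ennreal l |l. l > 0 \<and> P l}"
  proof (rule Inf_greatest)
    fix y assume "y \<in> {ennreal l |l. l > 0 \<and> P l}"
    then obtain l where l: "y = ennreal l" "l > 0" "P l" by auto
    have "x \<le> ennreal (M * l)" unfolding x_def using PQ[OF l(2,3)] M l(2)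
      by (intro Inf_lower) auto
    also have "\<dots> = ennreal M * ennreal l" using M l by (simp add: ennreal_mult)
    finally show "x / ennreal M \<le> y" using M l by (intro divide_le_posI_ennreal) auto
  qed
  then have "ennreal M * (x / ennreal M) \<le> ennreal M * Inf {ennreal l |l. l > 0 \<and> P l}"
    by (rule mult_left_mono) simp
  moreover have "ennreal M * (x / ennreal M) = x"
    using M by (simp add: ennreal_times_divide mult.commute[of "ennreal M"] ennreal_mult_divide_eq)
  ultimately show ?thesis by (simp add: x_def)
qed

locale yctx =
  fixes \<Phi> :: "real \<Rightarrow> ennreal" and p D :: real
  assumes p1: "p > 1" and D1: "D \<ge> 1"
    and lam: "\<And>t c. t \<ge> 0 \<Longrightarrow> 0 < c \<Longrightarrow> c \<le> 1 \<Longrightarrow> \<Phi> (c*t) \<le> ennreal (c powr p) * \<Phi> t"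
    and dl: "\<And>t. t \<ge> 0 \<Longrightarrow> \<Phi> (2*t) \<le> ennreal D * \<Phi> t"
    and fin: "\<And>t. t \<ge> 0 \<Longrightarrow> \<Phi> t < \<infinity>"
    and zero: "\<Phi> 0 = 0"
    and lim: "(\<Phi> \<longlongrightarrow> \<infinity>) at_top"
begin

definition "\<phi> t = enn2real (\<Phi> t)"

lemma phi_nonneg: "\<phi> t \<ge> 0" by (simp add: \<phi>_def)

lemma Phi_eq: "t \<ge> 0 \<Longrightarrow> \<Phi> t = ennreal (\<phi> t)"
  using fin[of t] by (simp add: \<phi>_def ennreal_enn2real_if) 

lemma phi0: "\<phi> 0 = 0" by (simp add: \<phi>_def zero)

lemma phi_lam: "t \<ge> 0 \<Longrightarrow> 0 < c \<Longrightarrow> c \<le> 1 \<Longrightarrow> \<phi> (c*t) \<le> c powr p * \<phi> t"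
proof -
  assume a: "t \<ge> 0" "0 < c" "c \<le> 1"
  have "ennreal (\<phi> (c*t)) \<le> ennreal (c powr p) * ennreal (\<phi> t)"
    using lam[OF a] Phi_eq[of t] Phi_eq[of "c*t"] a by simp
  also have "\<dots> = ennreal (c powr p * \<phi> t)" by (simp add: ennreal_mult phi_nonneg)
  finally show ?thesis using phi_nonneg by (simp add: ennreal_le_iff)
qed

lemma phi_dl: "t \<ge> 0 \<Longrightarrow> \<phi> (2*t) \<le> D * \<phi> t"
proof -
  assume a: "t \<ge> 0"
  have "ennreal (\<phi> (2*t)) \<le> ennreal D * ennreal (\<phi> t)"
    using dl[OF a] Phi_eq[of t] Phi_eq[of "2*t"] a by simp
  also have "\<dots> = ennreal (D * \<phi> t)" using D1 by (simp add: ennreal_mult phi_nonneg)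
  finally show ?thesis using phi_nonneg D1 by (simp add: ennreal_le_iff)
qed

lemma phi_ratio: "0 < a \<Longrightarrow> a \<le> b \<Longrightarrow> \<phi> a \<le> (a/b) powr p * \<phi> b"
  using phi_lam[of b "a/b"] by simp

lemma phi_mono: "0 \<le> s \<Longrightarrow> s \<le> t \<Longrightarrow> \<phi> s \<le> \<phi> t"
proof (cases "s = 0")
  case True then show ?thesis by (simp add: phi0 phi_nonneg)
next
  case False
  assume a: "0 \<le> s" "s \<le> t"
  then have "\<phi> s \<le> (s/t) powr p * \<phi> t" using False by (intro phi_ratio) auto
  also have "\<dots> \<le> 1 * \<phi> t"
    using a False p1 phi_nonneg by (intro mult_right_mono) (auto intro!: powr_le1)
  finally show ?thesis by simp
qed

lemma phi_pow2: "t \<ge> 0 \<Longrightarrow> \<phi> (2^n*t) \<le> D^n * \<phi> t"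
proof (induction n)
  case 0 then show ?case by simp
next
  case (Suc n)
  have "\<phi> (2^Suc n * t) = \<phi> (2 * (2^n*t))" by (simp add: mult.assoc)
  also have "\<dots> \<le> D * \<phi> (2^n*t)" using Suc by (intro phi_dl) auto
  also have "\<dots> \<le> D * (D^n * \<phi> t)" using Suc D1 by (intro mult_left_mono) auto
  finally show ?case by simp
qed

lemma phi_pos: "t > 0 \<Longrightarrow> \<phi> t > 0"
proof (rule ccontr)
  assume t: "t > 0" "\<not> \<phi> t > 0"
  then have z: "\<phi> t = 0" using phi_nonneg[of t] by simp
  have "eventually (\<lambda>x. \<Phi> x > 1) at_top"
    using lim by (simp add: order_tendsto_iff)
  then obtain s where s: "\<And>x. x \<ge> s \<Longrightarrow> \<Phi> x > 1" by (auto simp: eventually_at_top_linorder)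
  obtain n where n: "max s 0 / t < 2^n" using real_arch_pow[of 2 "max s 0 / t"] by auto
  then have "max s 0 < 2^n * t" using t by (simp add: field_simps)
  then have "\<Phi> (2^n*t) > 1" using s by auto
  moreover have "\<phi> (2^n*t) \<le> 0" using phi_pow2[of t n] z t by simp
  ultimately show False using Phi_eq[of "2^n*t"] t phi_nonneg[of "2^n*t"] by simp
qed

lemma termA: "0 < a \<Longrightarrow> a < v \<Longrightarrow> \<phi> a * (v/a) powr q \<le> \<phi> v * (a/v) powr (p - q)"
proof -
  assume a: "0 < a" "a < v"
  have "\<phi> a * (v/a) powr q \<le> ((a/v) powr p * \<phi> v) * (v/a) powr q"
    using phi_ratio[of a v] a by (intro mult_right_mono) auto
  also have "\<dots> = \<phi> v * ((a/v) powr p * (v/a) powr q)" by simp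
  also have "(a/v) powr p * (v/a) powr q = (a/v) powr (p - q)"
  proof -
    have "(v/a) powr q = (a/v) powr (- q)"
      using a by (simp add: powr_minus_divide powr_divide)
    then show ?thesis using a by (simp add: powr_add[symmetric])
  qed
  finally show ?thesis .
qed

lemma sumA:
  assumes q: "q < p" and v: "v \<ge> 0"
  shows "(\<integral>\<^sup>+k. ennreal (if pw k < v then \<phi> (pw k) * (v / pw k) powr q else 0) \<partial>count_space UNIV)
     \<le> ennreal (1 / (1 - 2 powr (q - p)) * \<phi> v)"
proof (cases "v = 0")
  case True then show ?thesis by (simp add: less_le_not_le[of _ 0] not_less order.strict_implies_order)
next
  case False
  then have v: "v > 0" using v by simp
  define m where "m = \<lceil>log 2 v\<rceil> - 1"
  have "(\<integral>\<^sup>+k. ennreal (if pw k < v then \<phi> (pw k) * (v / pw k) powr q else 0) \<partial>count_space UNIV)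
     \<le> ennreal (\<phi> v / (1 - 2 powr (q - p)))"
  proof (rule int_geom_down[where m=m])
    fix k :: int assume "k > m"
    then show "ennreal (if pw k < v then \<phi> (pw k) * (v / pw k) powr q else 0) = 0"
      using pw_less_iff[OF v, of k] by (simp add: m_def)
  next
    fix k :: int assume k: "k \<le> m"
    then have kv: "pw k < v" using pw_less_iff[OF v, of k] by (simp add: m_def)
    have mv: "pw m < v" using pw_less_iff[OF v, of m] by (simp add: m_def)
    have "\<phi> (pw k) * (v / pw k) powr q \<le> \<phi> v * (pw k / v) powr (p - q)"
      using kv by (intro termA) auto
    also have "(pw k / v) powr (p - q) \<le> (pw k / pw m) powr (p - q)"
      using mv q v by (intro powr_mono2) (auto intro!: divide_left_mono less_imp_le[OF pw_pos] divide_nonneg_pos)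
    also have "(pw k / pw m) powr (p - q) = (2 powr (q - p)) ^ nat (m - k)"
    proof -
      have "(pw k / pw m) powr (p - q) = 2 powr ((k - m) * (p - q))"
        by (simp only: pw_div) (simp add: pw_def powr_powr)
      also have "\<dots> = (2 powr (q - p)) powr (real_of_int (m - k))"
        by (simp add: powr_powr algebra_simps)
      also have "\<dots> = (2 powr (q - p)) ^ nat (m - k)"
        using k by (intro powr_int_nat) auto
      finally show ?thesis .
    qed
    finally have "\<phi> (pw k) * (v / pw k) powr q \<le> \<phi> v * (2 powr (q - p)) ^ nat (m - k)"
      using phi_nonneg[of v] by (simp add: mult_left_mono)
    then show "ennreal (if pw k < v then \<phi> (pw k) * (v / pw k) powr q else 0)
        \<le> ennreal (\<phi> v * (2 powr (q - p)) ^ nat (m - k))"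
      using kv by (simp add: ennreal_leI)
  next
    show "0 \<le> 2 powr (q - p)" by simp
    show "2 powr (q - p) < 1" using q by (simp add: powr_less_one)
    show "0 \<le> \<phi> v" by (rule phi_nonneg)
  qed
  then show ?thesis by simp
qed

lemma sumB:
  assumes q: "q > 0" and r: "D * 2 powr (- q) < 1" and v: "v \<ge> 0"
  shows "(\<integral>\<^sup>+k. ennreal (if v \<le> pw k then \<phi> (pw k) * (v / pw k) powr q else 0) \<partial>count_space UNIV)
     \<le> ennreal (D / (1 - D * 2 powr (- q)) * \<phi> v)"
proof (cases "v = 0")
  case True
  have "\<And>k. (if v \<le> pw k then \<phi> (pw k) * (v / pw k) powr q else 0) = 0" using True by simp
  then show ?thesis by simp
next
  case False
  then have v: "v > 0" using v by simp
  define m where "m = \<lceil>log 2 v\<rceil>"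
  have "(\<integral>\<^sup>+k. ennreal (if v \<le> pw k then \<phi> (pw k) * (v / pw k) powr q else 0) \<partial>count_space UNIV)
     \<le> ennreal ((D * \<phi> v) / (1 - D * 2 powr (- q)))"
  proof (rule int_geom_up[where m=m])
    fix k :: int assume "k < m"
    then show "ennreal (if v \<le> pw k then \<phi> (pw k) * (v / pw k) powr q else 0) = 0"
      using pw_less_iff[OF v, of k] by (simp add: m_def not_le[symmetric])
  next
    fix k :: int assume k: "k \<ge> m"
    have m1: "pw (m - 1) < v" using pw_less_iff[OF v, of "m-1"] by (simp add: m_def)
    have mv: "v \<le> pw m" using pw_less_iff[OF v, of m] by (simp add: m_def)
    have kv: "v \<le> pw k" using pw_less_iff[OF v, of k] k by (simp add: m_def)
    define n where "n = nat (k - m)"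
    have "pw k = 2 ^ Suc n * pw (m - 1)"
    proof -
      have "pw k = pw ((k - m + 1) + (m - 1))" by simp
      also have "\<dots> = pw (k - m + 1) * pw (m - 1)" by (rule pw_mult)
      also have "pw (k - m + 1) = 2 ^ Suc n" using k by (simp add: pw_nat n_def Suc_nat_eq_nat_zadd1 add.commute)
      finally show ?thesis .
    qed
    then have "\<phi> (pw k) \<le> D ^ Suc n * \<phi> (pw (m - 1))"
      using phi_pow2[of "pw (m-1)" "Suc n"] by (simp add: less_imp_le)
    also have "\<dots> \<le> D ^ Suc n * \<phi> v"
      using m1 D1 by (intro mult_left_mono phi_mono) (auto simp: less_imp_le)
    finally have A: "\<phi> (pw k) \<le> D ^ Suc n * \<phi> v" .
    have "(v / pw k) powr q \<le> (pw m / pw k) powr q"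
      using mv q v by (intro powr_mono2) (auto intro!: divide_right_mono less_imp_le[OF pw_pos] divide_nonneg_pos)
    also have "(pw m / pw k) powr q = (2 powr (- q)) ^ n"
    proof -
      have "(pw m / pw k) powr q = 2 powr ((m - k) * q)"
        by (simp only: pw_div) (simp add: pw_def powr_powr)
      also have "\<dots> = (2 powr (- q)) powr (real_of_int (k - m))"
        by (simp add: powr_powr algebra_simps)
      also have "\<dots> = (2 powr (- q)) ^ n"
        using k unfolding n_def by (intro powr_int_nat) auto
      finally show ?thesis .
    qed
    finally have B: "(v / pw k) powr q \<le> (2 powr (- q)) ^ n" .
    have "\<phi> (pw k) * (v / pw k) powr q \<le> (D ^ Suc n * \<phi> v) * (2 powr (- q)) ^ n"
      using A B D1 by (intro mult_mono) (auto simp: phi_nonneg)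
    also have "\<dots> = D * \<phi> v * (D * 2 powr (- q)) ^ n"
      by (simp add: power_mult_distrib)
    finally show "ennreal (if v \<le> pw k then \<phi> (pw k) * (v / pw k) powr q else 0)
        \<le> ennreal (D * \<phi> v * (D * 2 powr (- q)) ^ nat (k - m))"
      using kv by (simp add: ennreal_leI n_def)
  next
    show "0 \<le> D * 2 powr (- q)" using D1 by simp
    show "D * 2 powr (- q) < 1" by (rule r)
    show "0 \<le> D * \<phi> v" using D1 phi_nonneg by simp
  qed
  then show ?thesis by simp
qed

lemma phi_meas: "V \<in> borel_measurable M \<Longrightarrow> (\<And>x. V x \<ge> 0) \<Longrightarrow> (\<lambda>x. \<phi> (V x)) \<in> borel_measurable M"
proof -
  assume Vm: "V \<in> borel_measurable M" and V0: "\<And>x. V x \<ge> 0"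
  have "mono (\<lambda>t. \<phi> (max t 0))"
    by (auto simp: mono_def intro!: phi_mono)
  then have "(\<lambda>t. \<phi> (max t 0)) \<in> borel_measurable borel" by (rule borel_measurable_mono)
  then have "(\<lambda>x. \<phi> (max (V x) 0)) \<in> borel_measurable M"
    using Vm by (rule measurable_compose[rotated])
  then show ?thesis using V0 by (simp add: max_absorb1)
qed

lemma lower_pt:
  fixes a b :: "int \<Rightarrow> real"
  assumes u: "u \<ge> 0" and ab: "\<And>k. 2 * pw k < u \<Longrightarrow> 1 \<le> a k + b k"
    and a0: "\<And>k. a k \<ge> 0" and b0: "\<And>k. b k \<ge> 0"
  shows "ennreal (\<phi> (u/4)) \<le> (\<integral>\<^sup>+k. ennreal (\<phi> (pw k) * a k) + ennreal (\<phi> (pw k) * b k) \<partial>count_space UNIV)"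
proof (cases "u = 0")
  case True then show ?thesis by (simp add: phi0)
next
  case False
  then have u: "u > 0" using u by simp
  define k0 where "k0 = \<lceil>log 2 u\<rceil> - 2"
  have "pw (k0 + 1) < u" using pw_less_iff[OF u, of "k0+1"] by (simp add: k0_def)
  then have lt: "2 * pw k0 < u" using pw_mult[of k0 1] by (simp add: pw_def)
  have "\<not> pw (k0 + 2) < u" using pw_less_iff[OF u, of "k0+2"] by (simp add: k0_def)
  then have "u \<le> 4 * pw k0" using pw_mult[of k0 2] by (simp add: pw_def)
  then have "\<phi> (u/4) \<le> \<phi> (pw k0)" using u by (intro phi_mono) auto
  also have "\<dots> \<le> \<phi> (pw k0) * (a k0 + b k0)"
    using ab[OF lt] phi_nonneg[of "pw k0"] by (simp add: mult_le_cancel_left1)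
  finally have "ennreal (\<phi> (u/4)) \<le> ennreal (\<phi> (pw k0) * a k0) + ennreal (\<phi> (pw k0) * b k0)"
    using a0 b0 phi_nonneg by (simp add: ennreal_plus[symmetric] distrib_left ennreal_leI del: ennreal_plus)
  also have "\<dots> \<le> (\<integral>\<^sup>+k. ennreal (\<phi> (pw k) * a k) + ennreal (\<phi> (pw k) * b k) \<partial>count_space UNIV)"
    by (rule nn_integral_ge_point) simp
  finally show ?thesis .
qed

lemma orlicz_core:
  fixes T :: "(real^'n \<Rightarrow> complex) \<Rightarrow> (real^'n \<Rightarrow> complex)" and f :: "real^'n \<Rightarrow> complex"
  assumes q0: "1 < q0" "q0 < p" and q1: "1 < q1" "D * 2 powr (- q1) < 1"
    and C0: "C0 \<ge> 0" and C1: "C1 \<ge> 0"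
    and hT0: "\<And>g. in_Lp q0 g \<Longrightarrow> in_Lp q0 (T g) \<and> (\<integral>x. cmod (T g x) powr q0 \<partial>lebesgue) \<le> C0 * (\<integral>x. cmod (g x) powr q0 \<partial>lebesgue)"
    and hT1: "\<And>g. in_Lp q1 g \<Longrightarrow> in_Lp q1 (T g) \<and> (\<integral>x. cmod (T g x) powr q1 \<partial>lebesgue) \<le> C1 * (\<integral>x. cmod (g x) powr q1 \<partial>lebesgue)"
    and hadd: "\<And>g h. in_Lp q0 g \<Longrightarrow> in_Lp q1 h \<Longrightarrow> AE x in lebesgue. T (\<lambda>y. g y + h y) x = T g x + T h x"
    and fm: "f \<in> borel_measurable lebesgue" and l: "l > 0"
    and fi: "(\<integral>\<^sup>+x. \<Phi> (cmod (f x) / l) \<partial>lebesgue) \<le> 1"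
  shows "(\<exists>g\<in>borel_measurable lebesgue. AE x in lebesgue. T f x = g x) \<and>
     (\<integral>\<^sup>+x. \<Phi> (cmod (T f x) / (4*l)) \<partial>lebesgue)
     \<le> ennreal (C0 * (1 / (1 - 2 powr (q0 - p))) + C1 * (D / (1 - D * 2 powr (- q1))))"
proof -
  define K0 where "K0 = 1 / (1 - 2 powr (q0 - p))"
  define K1 where "K1 = D / (1 - D * 2 powr (- q1))"
  have K0: "K0 \<ge> 0" using q0 by (simp add: K0_def powr_less_one less_imp_le)
  have K1: "K1 \<ge> 0" using q1 D1 by (simp add: K1_def)
  define V where "V x = cmod (f x) / l" for x
  define r where "r k = l * pw k" for k
  have r0: "r k > 0" for k using l by (simp add: r_def)
  define hi where "hi k y = (if r k < cmod (f y) then f y else 0)" for k y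
  define lo where "lo k y = (if r k < cmod (f y) then 0 else f y)" for k y
  have V0: "V x \<ge> 0" for x using l by (simp add: V_def)
  have Vm: "V \<in> borel_measurable lebesgue" unfolding V_def using fm by measurable
  have phiVm: "(\<lambda>x. \<phi> (V x)) \<in> borel_measurable lebesgue" by (rule phi_meas[OF Vm V0])
  have hiV: "\<phi> (pw k) * (cmod (hi k x) / r k) powr q0
      = (if pw k < V x then \<phi> (pw k) * (V x / pw k) powr q0 else 0)" for k x
    using l q0 by (auto simp: hi_def r_def V_def field_simps)
  have loV: "\<phi> (pw k) * (cmod (lo k x) / r k) powr q1
      = (if V x \<le> pw k then \<phi> (pw k) * (V x / pw k) powr q1 else 0)" for k x
    using l q1 by (auto simp: lo_def r_def V_def field_simps)
  have sA: "(\<integral>\<^sup>+k. ennreal (if pw k < V x then \<phi> (pw k) * (V x / pw k) powr q0 else 0) \<partial>count_space UNIV)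
     \<le> ennreal (K0 * \<phi> (V x))" for x
    unfolding K0_def using q0 V0 by (intro sumA) auto
  have sB: "(\<integral>\<^sup>+k. ennreal (if V x \<le> pw k then \<phi> (pw k) * (V x / pw k) powr q1 else 0) \<partial>count_space UNIV)
     \<le> ennreal (K1 * \<phi> (V x))" for x
    unfolding K1_def using q1 V0 by (intro sumB) auto
  have phiV_int: "(\<integral>\<^sup>+x. ennreal (\<phi> (V x)) \<partial>lebesgue) \<le> 1"
  proof -
    have "(\<integral>\<^sup>+x. ennreal (\<phi> (V x)) \<partial>lebesgue) = (\<integral>\<^sup>+x. \<Phi> (cmod (f x) / l) \<partial>lebesgue)"
    proof (intro nn_integral_cong)
      fix x show "ennreal (\<phi> (V x)) = \<Phi> (cmod (f x) / l)" using Phi_eq[OF V0[of x]] by (simp add: V_def)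
    qed
    then show ?thesis using fi by simp
  qed
  have phiV_fin: "(\<integral>\<^sup>+x. ennreal (\<phi> (V x)) \<partial>lebesgue) < \<infinity>"
    using phiV_int by (simp add: le_less_trans)
  have ptA: "\<phi> (pw k) * (cmod (hi k x) / r k) powr q0 \<le> K0 * \<phi> (V x)" for k x
  proof -
    have "ennreal (if pw k < V x then \<phi> (pw k) * (V x / pw k) powr q0 else 0)
        \<le> (\<integral>\<^sup>+k. ennreal (if pw k < V x then \<phi> (pw k) * (V x / pw k) powr q0 else 0) \<partial>count_space UNIV)"
      by (rule nn_integral_ge_point) simp
    also have "\<dots> \<le> ennreal (K0 * \<phi> (V x))" by (rule sA)
    finally show ?thesis using K0 phi_nonneg by (simp add: hiV ennreal_le_iff del: ennreal_le_iff[symmetric])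
  qed
  have ptB: "\<phi> (pw k) * (cmod (lo k x) / r k) powr q1 \<le> K1 * \<phi> (V x)" for k x
  proof -
    have "ennreal (if V x \<le> pw k then \<phi> (pw k) * (V x / pw k) powr q1 else 0)
        \<le> (\<integral>\<^sup>+k. ennreal (if V x \<le> pw k then \<phi> (pw k) * (V x / pw k) powr q1 else 0) \<partial>count_space UNIV)"
      by (rule nn_integral_ge_point) simp
    also have "\<dots> \<le> ennreal (K1 * \<phi> (V x))" by (rule sB)
    finally show ?thesis using K1 phi_nonneg by (simp add: loV ennreal_le_iff del: ennreal_le_iff[symmetric])
  qed
  have him: "hi k \<in> borel_measurable lebesgue" for k unfolding hi_def using fm by measurable
  have lom: "lo k \<in> borel_measurable lebesgue" for k unfolding lo_def using fm by measurable
  have hiLp: "in_Lp q0 (hi k)" for k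
  proof (rule inLp_of_bound[OF him _ phiVm phiV_fin])
    fix x
    have pp: "\<phi> (pw k) > 0" by (rule phi_pos) simp
    have "cmod (hi k x) powr q0 = r k powr q0 * (cmod (hi k x) / r k) powr q0"
      using r0[of k] by (simp add: powr_divide)
    also have "\<dots> = r k powr q0 / \<phi> (pw k) * (\<phi> (pw k) * (cmod (hi k x) / r k) powr q0)"
      using pp by simp
    also have "\<dots> \<le> r k powr q0 / \<phi> (pw k) * (K0 * \<phi> (V x))"
      using pp by (intro mult_left_mono ptA) auto
    finally show "cmod (hi k x) powr q0 \<le> (r k powr q0 / \<phi> (pw k) * K0) * \<phi> (V x)" by simp
  next
    show "0 \<le> r k powr q0 / \<phi> (pw k) * K0" using K0 phi_nonneg by simp
  qed
  have loLp: "in_Lp q1 (lo k)" for k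
  proof (rule inLp_of_bound[OF lom _ phiVm phiV_fin])
    fix x
    have pp: "\<phi> (pw k) > 0" by (rule phi_pos) simp
    have "cmod (lo k x) powr q1 = r k powr q1 * (cmod (lo k x) / r k) powr q1"
      using r0[of k] by (simp add: powr_divide)
    also have "\<dots> = r k powr q1 / \<phi> (pw k) * (\<phi> (pw k) * (cmod (lo k x) / r k) powr q1)"
      using pp by simp
    also have "\<dots> \<le> r k powr q1 / \<phi> (pw k) * (K1 * \<phi> (V x))"
      using pp by (intro mult_left_mono ptB) auto
    finally show "cmod (lo k x) powr q1 \<le> (r k powr q1 / \<phi> (pw k) * K1) * \<phi> (V x)" by simp
  next
    show "0 \<le> r k powr q1 / \<phi> (pw k) * K1" using K1 phi_nonneg by simp
  qed
  have Thim: "T (hi k) \<in> borel_measurable lebesgue" for k using hT0[OF hiLp] by (simp add: in_Lp_def)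
  have Tlom: "T (lo k) \<in> borel_measurable lebesgue" for k using hT1[OF loLp] by (simp add: in_Lp_def)
  have split: "(\<lambda>y. hi k y + lo k y) = f" for k by (auto simp: hi_def lo_def)
  have AEs: "AE x in lebesgue. \<forall>k. T f x = T (hi k) x + T (lo k) x"
    unfolding AE_all_countable
  proof
    fix k show "AE x in lebesgue. T f x = T (hi k) x + T (lo k) x"
      using hadd[OF hiLp[of k] loLp[of k]] by (simp add: split)
  qed
  define LHS where "LHS k x = ennreal (\<phi> (pw k) * (cmod (T (hi k) x) / r k) powr q0)
      + ennreal (\<phi> (pw k) * (cmod (T (lo k) x) / r k) powr q1)" for k x
  define RHS where "RHS k x = ennreal (C0 * (\<phi> (pw k) * (cmod (hi k x) / r k) powr q0))
      + ennreal (C1 * (\<phi> (pw k) * (cmod (lo k x) / r k) powr q1))" for k x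
  have LHSm: "LHS k \<in> borel_measurable lebesgue" for k
    unfolding LHS_def using Thim Tlom by measurable
  have RHSm: "RHS k \<in> borel_measurable lebesgue" for k
    unfolding RHS_def using him lom by measurable
  have step1: "AE x in lebesgue. \<Phi> (cmod (T f x) / (4*l)) \<le> (\<integral>\<^sup>+k. LHS k x \<partial>count_space UNIV)"
    using AEs
  proof eventually_elim
    case (elim x)
    have eq: "\<Phi> (cmod (T f x) / (4*l)) = ennreal (\<phi> ((cmod (T f x) / l) / 4))"
      using Phi_eq[of "(cmod (T f x) / l) / 4"] l by (simp add: mult.commute)
    show ?case unfolding eq LHS_def
    proof (rule lower_pt)
      show "0 \<le> cmod (T f x) / l" using l by simp
    next
      fix k assume k: "2 * pw k < cmod (T f x) / l"
      have "2 * r k < cmod (T f x)" using k l by (simp add: r_def field_simps)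
      also have "\<dots> \<le> cmod (T (hi k) x) + cmod (T (lo k) x)"
        using elim[rule_format, of k] by (simp add: norm_triangle_ineq)
      finally have "r k < cmod (T (hi k) x) \<or> r k < cmod (T (lo k) x)" by auto
      then show "1 \<le> (cmod (T (hi k) x) / r k) powr q0 + (cmod (T (lo k) x) / r k) powr q1"
      proof
        assume "r k < cmod (T (hi k) x)"
        then have "1 \<le> (cmod (T (hi k) x) / r k) powr q0"
          using r0[of k] q0 by (intro ge_one_powr_ge_zero) auto
        then show ?thesis by (simp add: add_increasing2)
      next
        assume "r k < cmod (T (lo k) x)"
        then have "1 \<le> (cmod (T (lo k) x) / r k) powr q1"
          using r0[of k] q1 by (intro ge_one_powr_ge_zero) auto
        then show ?thesis by (simp add: add_increasing)
      qed
    qed (simp_all)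
  qed
  have step3: "(\<integral>\<^sup>+x. LHS k x \<partial>lebesgue) \<le> (\<integral>\<^sup>+x. RHS k x \<partial>lebesgue)" for k
  proof -
    have "(\<integral>\<^sup>+x. LHS k x \<partial>lebesgue)
        = (\<integral>\<^sup>+x. ennreal (\<phi> (pw k) * (cmod (T (hi k) x) / r k) powr q0) \<partial>lebesgue)
        + (\<integral>\<^sup>+x. ennreal (\<phi> (pw k) * (cmod (T (lo k) x) / r k) powr q1) \<partial>lebesgue)"
      unfolding LHS_def using Thim Tlom by (intro nn_integral_add; measurable)
    also have "\<dots> \<le> ennreal C0 * (\<integral>\<^sup>+x. ennreal (\<phi> (pw k) * (cmod (hi k x) / r k) powr q0) \<partial>lebesgue)
        + ennreal C1 * (\<integral>\<^sup>+x. ennreal (\<phi> (pw k) * (cmod (lo k x) / r k) powr q1) \<partial>lebesgue)"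
      by (intro add_mono opbound[OF hT0 hiLp C0] opbound[OF hT1 loLp C1] phi_nonneg r0) auto
    also have "\<dots> = (\<integral>\<^sup>+x. ennreal C0 * ennreal (\<phi> (pw k) * (cmod (hi k x) / r k) powr q0) \<partial>lebesgue)
        + (\<integral>\<^sup>+x. ennreal C1 * ennreal (\<phi> (pw k) * (cmod (lo k x) / r k) powr q1) \<partial>lebesgue)"
      using him lom by (subst (1 2) nn_integral_cmult; measurable)
    also have "\<dots> = (\<integral>\<^sup>+x. RHS k x \<partial>lebesgue)"
      unfolding RHS_def using him lom C0 C1
      by (subst nn_integral_add[symmetric]; measurable?) (auto simp: ennreal_mult phi_nonneg intro!: nn_integral_cong)
    finally show ?thesis .
  qed
  have step5: "(\<integral>\<^sup>+k. RHS k x \<partial>count_space UNIV) \<le> ennreal ((C0 * K0 + C1 * K1) * \<phi> (V x))" for x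
  proof -
    have "(\<integral>\<^sup>+k. RHS k x \<partial>count_space UNIV)
      = (\<integral>\<^sup>+k. ennreal C0 * ennreal (if pw k < V x then \<phi> (pw k) * (V x / pw k) powr q0 else 0)
          + ennreal C1 * ennreal (if V x \<le> pw k then \<phi> (pw k) * (V x / pw k) powr q1 else 0) \<partial>count_space UNIV)"
      unfolding RHS_def hiV loV using C0 C1 by (intro nn_integral_cong) (simp add: ennreal_mult phi_nonneg)
    also have "\<dots> = ennreal C0 * (\<integral>\<^sup>+k. ennreal (if pw k < V x then \<phi> (pw k) * (V x / pw k) powr q0 else 0) \<partial>count_space UNIV)
        + ennreal C1 * (\<integral>\<^sup>+k. ennreal (if V x \<le> pw k then \<phi> (pw k) * (V x / pw k) powr q1 else 0) \<partial>count_space UNIV)"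
      by (simp add: nn_integral_add nn_integral_cmult)
    also have "\<dots> \<le> ennreal C0 * ennreal (K0 * \<phi> (V x)) + ennreal C1 * ennreal (K1 * \<phi> (V x))"
      by (intro add_mono mult_left_mono sA sB) auto
    also have "\<dots> = ennreal ((C0 * K0 + C1 * K1) * \<phi> (V x))"
      using C0 C1 K0 K1 phi_nonneg[of "V x"]
      by (simp add: ennreal_mult[symmetric] ennreal_plus[symmetric] algebra_simps del: ennreal_plus)
    finally show ?thesis .
  qed
  have "(\<integral>\<^sup>+x. \<Phi> (cmod (T f x) / (4*l)) \<partial>lebesgue) \<le> (\<integral>\<^sup>+x. \<integral>\<^sup>+k. LHS k x \<partial>count_space UNIV \<partial>lebesgue)"
    by (rule nn_integral_mono_AE[OF step1])
  also have "\<dots> = (\<integral>\<^sup>+k. \<integral>\<^sup>+x. LHS k x \<partial>lebesgue \<partial>count_space UNIV)"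
    using LHSm by (intro nn_integral_count_space_nn_integral) auto
  also have "\<dots> \<le> (\<integral>\<^sup>+k. \<integral>\<^sup>+x. RHS k x \<partial>lebesgue \<partial>count_space UNIV)"
    by (intro nn_integral_mono step3)
  also have "\<dots> = (\<integral>\<^sup>+x. \<integral>\<^sup>+k. RHS k x \<partial>count_space UNIV \<partial>lebesgue)"
    using RHSm by (intro nn_integral_count_space_nn_integral[symmetric]) auto
  also have "\<dots> \<le> (\<integral>\<^sup>+x. ennreal (C0 * K0 + C1 * K1) * ennreal (\<phi> (V x)) \<partial>lebesgue)"
    using step5 C0 C1 K0 K1 by (intro nn_integral_mono) (simp add: ennreal_mult phi_nonneg)
  also have "\<dots> = ennreal (C0 * K0 + C1 * K1) * (\<integral>\<^sup>+x. ennreal (\<phi> (V x)) \<partial>lebesgue)"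
    using phiVm by (intro nn_integral_cmult) measurable
  also have "\<dots> \<le> ennreal (C0 * K0 + C1 * K1) * 1"
    by (intro mult_left_mono phiV_int) auto
  finally have fin: "(\<integral>\<^sup>+x. \<Phi> (cmod (T f x) / (4*l)) \<partial>lebesgue)
     \<le> ennreal (C0 * (1 / (1 - 2 powr (q0 - p))) + C1 * (D / (1 - D * 2 powr (- q1))))"
    by (simp add: K0_def K1_def)
  have "\<exists>g\<in>borel_measurable lebesgue. AE x in lebesgue. T f x = g x"
  proof (intro bexI)
    show "AE x in lebesgue. T f x = T (hi 0) x + T (lo 0) x" using AEs by auto
    show "(\<lambda>x. T (hi 0) x + T (lo 0) x) \<in> borel_measurable lebesgue"
      using Thim[of 0] Tlom[of 0] by measurable
  qed
  with fin show ?thesis by blast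
qed

lemma phi_grow: "0 < a \<Longrightarrow> 1 \<le> X \<Longrightarrow> X powr p * \<phi> a \<le> \<phi> (X * a)"
proof -
  assume a: "0 < a" "1 \<le> X"
  have "\<phi> a \<le> (a / (X*a)) powr p * \<phi> (X*a)" using a by (intro phi_ratio) auto
  also have "(a / (X*a)) powr p = inverse (X powr p)"
  proof -
    have "a / (X*a) = inverse X" using a by (simp add: field_simps)
    then show ?thesis by (simp add: inverse_powr)
  qed
  finally have "\<phi> a \<le> inverse (X powr p) * \<phi> (X*a)" .
  then show ?thesis using a by (simp add: field_simps)
qed

lemma mu_bound:
  fixes f :: "real^'n \<Rightarrow> complex"
  assumes fw: "\<And>t. t > 0 \<Longrightarrow> \<Phi> (t/l) * distrib_fun f t \<le> 1" and l: "l > 0"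
    and t: "t > 0" and a: "a \<ge> 0"
  shows "ennreal a * distrib_fun f t \<le> ennreal (a / \<phi> (t/l))"
proof -
  have pp: "\<phi> (t/l) > 0" using t l by (intro phi_pos) simp
  have "ennreal a = ennreal (a / \<phi> (t/l)) * ennreal (\<phi> (t/l))"
    using pp a by (simp add: ennreal_mult[symmetric])
  then have "ennreal a * distrib_fun f t = ennreal (a / \<phi> (t/l)) * (\<Phi> (t/l) * distrib_fun f t)"
    using Phi_eq[of "t/l"] t l by (simp add: mult.assoc)
  also have "\<dots> \<le> ennreal (a / \<phi> (t/l)) * 1" by (intro mult_left_mono fw t) auto
  finally show ?thesis by simp
qed

lemma weak_core:
  fixes T :: "(real^'n \<Rightarrow> complex) \<Rightarrow> (real^'n \<Rightarrow> complex)" and f :: "real^'n \<Rightarrow> complex"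
  assumes q0: "1 < q0" "q0 < p" and q1: "1 < q1" "D * 2 powr (- q1) < 1"
    and C0: "C0 \<ge> 0" and C1: "C1 \<ge> 0"
    and hT0: "\<And>g. in_Lp q0 g \<Longrightarrow> in_Lp q0 (T g) \<and> (\<integral>x. cmod (T g x) powr q0 \<partial>lebesgue) \<le> C0 * (\<integral>x. cmod (g x) powr q0 \<partial>lebesgue)"
    and hT1: "\<And>g. in_Lp q1 g \<Longrightarrow> in_Lp q1 (T g) \<and> (\<integral>x. cmod (T g x) powr q1 \<partial>lebesgue) \<le> C1 * (\<integral>x. cmod (g x) powr q1 \<partial>lebesgue)"
    and hadd: "\<And>g h. in_Lp q0 g \<Longrightarrow> in_Lp q1 h \<Longrightarrow> AE x in lebesgue. T (\<lambda>y. g y + h y) x = T g x + T h x"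
    and fm: "f \<in> borel_measurable lebesgue" and l: "l > 0"
    and fw: "\<And>t. t > 0 \<Longrightarrow> \<Phi> (t/l) * distrib_fun f t \<le> 1"
    and s: "s > 0"
  shows "distrib_fun (T f) (2 * s) \<le> ennreal ((C0 * (2 powr q0 / (1 - 2 powr (q0 - p)))
            + C1 * (D / (1 - D * 2 powr (- q1)))) / \<phi> (s/l))"
proof -
  define F where "F = \<phi> (s/l)"
  have F: "F > 0" unfolding F_def using s l by (intro phi_pos) simp
  define r0 where "r0 = 2 powr (q0 - p)"
  define r1 where "r1 = D * 2 powr (- q1)"
  have r0: "0 \<le> r0" "r0 < 1" using q0 by (auto simp: r0_def powr_less_one)
  have r1: "0 \<le> r1" "r1 < 1" using q1 D1 by (auto simp: r1_def)
  define hi where "hi y = (if s < cmod (f y) then f y else 0)" for y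
  define lo where "lo y = (if s < cmod (f y) then 0 else f y)" for y
  have him: "hi \<in> borel_measurable lebesgue" unfolding hi_def using fm by measurable
  have lom: "lo \<in> borel_measurable lebesgue" unfolding lo_def using fm by measurable
  have IH: "(\<integral>\<^sup>+x. ennreal ((cmod (hi x) / s) powr q0) \<partial>lebesgue) \<le> ennreal ((2 powr q0 / F) / (1 - r0))"
  proof (rule layer_bound[where a="\<lambda>k. pw (int k + 1) powr q0" and A="\<lambda>k. {y. s * pw (int k) < cmod (f y)}"])
    fix x
    show "ennreal ((cmod (hi x) / s) powr q0)
        \<le> (\<integral>\<^sup>+k. ennreal (pw (int k + 1) powr q0) * indicator {y. s * pw (int k) < cmod (f y)} x \<partial>count_space UNIV)"
    proof (cases "s < cmod (f x)")
      case False then show ?thesis using q0 by (simp add: hi_def)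
    next
      case True
      define v where "v = cmod (f x) / s"
      have v1: "v > 1" using True s by (simp add: v_def)
      define c where "c = \<lceil>log 2 v\<rceil>"
      have "log 2 v > 0" using v1 by simp
      then have c1: "c \<ge> 1" by (simp add: c_def)
      define k where "k = nat (c - 1)"
      have kc: "int k = c - 1" using c1 by (simp add: k_def)
      have lt: "pw (int k) < v" using pw_less_iff[of v "int k"] v1 kc by (simp add: c_def)
      have le: "v \<le> pw (int k + 1)" using pw_less_iff[of v "int k + 1"] v1 kc by (simp add: c_def)
      have "ennreal ((cmod (hi x) / s) powr q0) \<le> ennreal (pw (int k + 1) powr q0)"
        using True le v1 q0 by (intro ennreal_leI powr_mono2) (auto simp: hi_def v_def)
      also have "\<dots> = ennreal (pw (int k + 1) powr q0) * indicator {y. s * pw (int k) < cmod (f y)} x"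
        using lt s by (simp add: v_def field_simps indicator_def)
      also have "\<dots> \<le> (\<integral>\<^sup>+k. ennreal (pw (int k + 1) powr q0) * indicator {y. s * pw (int k) < cmod (f y)} x \<partial>count_space UNIV)"
        by (rule nn_integral_ge_point) simp
      finally show ?thesis .
    qed
  next
    fix k :: nat
    show "{y. s * pw (int k) < cmod (f y)} \<in> sets lebesgue" by (rule meas_gt[OF fm])
  next
    fix k :: nat
    have X: "pw (int k) \<ge> 1" by (simp add: pw_def ge_one_powr_ge_zero)
    have "ennreal (pw (int k + 1) powr q0) * emeasure lebesgue {y. s * pw (int k) < cmod (f y)}
        \<le> ennreal (pw (int k + 1) powr q0 / \<phi> (s * pw (int k) / l))"
      using mu_bound[OF fw l, of "s * pw (int k)" "pw (int k + 1) powr q0"] s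
      by (simp add: distrib_fun_def)
    also have "pw (int k + 1) powr q0 / \<phi> (s * pw (int k) / l) \<le> 2 powr q0 / F * r0 ^ k"
    proof -
      have g: "pw (int k) powr p * F \<le> \<phi> (pw (int k) * (s / l))"
        unfolding F_def using s l X by (intro phi_grow) auto
      have pk: "pw (int k) > 0" by simp
      have "pw (int k + 1) powr q0 = 2 powr q0 * pw (int k) powr q0"
        using pw_mult[of "int k" 1] by (simp add: pw_def powr_mult mult.commute)
      moreover have "r0 ^ k = pw (int k) powr q0 / pw (int k) powr p"
        by (simp add: r0_def pw_def powr_realpow[symmetric] powr_powr powr_diff[symmetric] algebra_simps)
      moreover have "\<phi> (s * pw (int k) / l) = \<phi> (pw (int k) * (s / l))" by (simp add: mult.commute)
      ultimately have eqs: "pw (int k + 1) powr q0 / \<phi> (s * pw (int k) / l) = 2 powr q0 * pw (int k) powr q0 / \<phi> (pw (int k) * (s / l))"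
          "2 powr q0 / F * r0 ^ k = 2 powr q0 * pw (int k) powr q0 / (pw (int k) powr p * F)"
        by simp_all
      have "2 powr q0 * pw (int k) powr q0 / \<phi> (pw (int k) * (s / l)) \<le> 2 powr q0 * pw (int k) powr q0 / (pw (int k) powr p * F)"
      proof -
        have "pw (int k) \<noteq> 0" using pk by linarith
        then have Bp: "0 < pw (int k) powr p * F" using F by (intro mult_pos_pos) auto
        have Yp: "0 < \<phi> (pw (int k) * (s / l))" using Bp g by linarith
        show ?thesis using g Bp Yp F by (intro divide_left_mono mult_pos_pos) auto
      qed
      then show ?thesis unfolding eqs .
    qed
    then have "ennreal (pw (int k + 1) powr q0 / \<phi> (s * pw (int k) / l)) \<le> ennreal (2 powr q0 / F * r0 ^ k)"
      by (rule ennreal_leI)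
    finally show "ennreal (pw (int k + 1) powr q0) * emeasure lebesgue {y. s * pw (int k) < cmod (f y)}
        \<le> ennreal (2 powr q0 / F * r0 ^ k)" .
  qed (use r0 F in auto)
  have IL: "(\<integral>\<^sup>+x. ennreal ((cmod (lo x) / s) powr q1) \<partial>lebesgue) \<le> ennreal ((D / F) / (1 - r1))"
  proof (rule layer_bound[where a="\<lambda>k. pw (- int k) powr q1" and A="\<lambda>k. {y. s * pw (- int k - 1) < cmod (f y)}"])
    fix x
    show "ennreal ((cmod (lo x) / s) powr q1)
        \<le> (\<integral>\<^sup>+k. ennreal (pw (- int k) powr q1) * indicator {y. s * pw (- int k - 1) < cmod (f y)} x \<partial>count_space UNIV)"
    proof (cases "s < cmod (f x) \<or> f x = 0")
      case True then show ?thesis using q1 by (auto simp: lo_def)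
    next
      case False
      define v where "v = cmod (f x) / s"
      have v0: "v > 0" "v \<le> 1" using False s by (auto simp: v_def)
      define c where "c = \<lceil>log 2 v\<rceil>"
      have "log 2 v \<le> 0" using v0 by simp
      then have c0: "c \<le> 0" by (simp add: c_def)
      define k where "k = nat (- c)"
      have kc: "- int k = c" using c0 by (simp add: k_def)
      have lt: "pw (- int k - 1) < v" using pw_less_iff[of v "- int k - 1"] v0 kc by (simp add: c_def)
      have le: "v \<le> pw (- int k)" using pw_less_iff[of v "- int k"] v0 kc by (simp add: c_def)
      have "ennreal ((cmod (lo x) / s) powr q1) \<le> ennreal (pw (- int k) powr q1)"
        using False le v0 q1 by (intro ennreal_leI powr_mono2) (auto simp: lo_def v_def)
      also have "\<dots> = ennreal (pw (- int k) powr q1) * indicator {y. s * pw (- int k - 1) < cmod (f y)} x"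
        using lt s by (simp add: v_def field_simps indicator_def)
      also have "\<dots> \<le> (\<integral>\<^sup>+k. ennreal (pw (- int k) powr q1) * indicator {y. s * pw (- int k - 1) < cmod (f y)} x \<partial>count_space UNIV)"
        by (rule nn_integral_ge_point) simp
      finally show ?thesis .
    qed
  next
    fix k :: nat
    show "{y. s * pw (- int k - 1) < cmod (f y)} \<in> sets lebesgue" by (rule meas_gt[OF fm])
  next
    fix k :: nat
    have "ennreal (pw (- int k) powr q1) * emeasure lebesgue {y. s * pw (- int k - 1) < cmod (f y)}
        \<le> ennreal (pw (- int k) powr q1 / \<phi> (s * pw (- int k - 1) / l))"
      using mu_bound[OF fw l, of "s * pw (- int k - 1)" "pw (- int k) powr q1"] s
      by (simp add: distrib_fun_def)
    also have "pw (- int k) powr q1 / \<phi> (s * pw (- int k - 1) / l) \<le> D / F * r1 ^ k"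
    proof -
      define y where "y = s * pw (- int k - 1) / l"
      have y0: "y > 0" using s l by (simp add: y_def)
      have sy: "s / l = 2 ^ Suc k * y"
      proof -
        have "pw (int (Suc k)) * pw (- int k - 1) = 1"
          using pw_mult[of "int (Suc k)" "- int k - 1"] by (simp add: pw_def)
        moreover have "pw (int (Suc k)) = 2 ^ Suc k" using pw_nat[of "int (Suc k)"] by (simp only: nat_int)
        ultimately show ?thesis by (simp add: y_def field_simps)
      qed
      have Fy: "F \<le> D ^ Suc k * \<phi> y"
        unfolding F_def sy using y0 by (intro phi_pow2) auto
      have Yp: "\<phi> y > 0" using y0 by (rule phi_pos)
      have Dp: "D ^ Suc k > 0" using D1 by simp
      define A where "A = pw (- int k) powr q1"
      have A0: "A \<ge> 0" by (simp add: A_def)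
      have Aeq: "A = (2 powr (- q1)) ^ k"
        by (simp add: A_def pw_def powr_realpow[symmetric] powr_powr mult.commute)
      have "A / \<phi> y = (A * D ^ Suc k) / (D ^ Suc k * \<phi> y)" using Dp D1 by simp
      also have "\<dots> \<le> (A * D ^ Suc k) / F"
        using Fy F A0 Dp Yp by (intro divide_left_mono mult_pos_pos) auto
      also have "\<dots> = D / F * r1 ^ k" by (simp add: Aeq r1_def power_mult_distrib field_simps)
      finally show ?thesis by (simp add: A_def y_def)
    qed
    then have "ennreal (pw (- int k) powr q1 / \<phi> (s * pw (- int k - 1) / l)) \<le> ennreal (D / F * r1 ^ k)"
      by (rule ennreal_leI)
    finally show "ennreal (pw (- int k) powr q1) * emeasure lebesgue {y. s * pw (- int k - 1) < cmod (f y)}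
        \<le> ennreal (D / F * r1 ^ k)" .
  qed (use r1 F D1 in auto)
  have B0: "0 \<le> (2 powr q0 / F) / (1 - r0)" using F r0 by simp
  have B1: "0 \<le> (D / F) / (1 - r1)" using F r1 D1 by simp
  have scale: "(\<integral>\<^sup>+x. ennreal (cmod (g x) powr P) \<partial>lebesgue)
      = ennreal (s powr P) * (\<integral>\<^sup>+x. ennreal ((cmod (g x) / s) powr P) \<partial>lebesgue)"
    if gm: "g \<in> borel_measurable lebesgue" for g :: "real^'n \<Rightarrow> complex" and P
  proof -
    have "(\<integral>\<^sup>+x. ennreal (cmod (g x) powr P) \<partial>lebesgue)
        = (\<integral>\<^sup>+x. ennreal (s powr P) * ennreal ((cmod (g x) / s) powr P) \<partial>lebesgue)"
      using s by (intro nn_integral_cong) (simp add: powr_divide ennreal_mult[symmetric])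
    also have "\<dots> = ennreal (s powr P) * (\<integral>\<^sup>+x. ennreal ((cmod (g x) / s) powr P) \<partial>lebesgue)"
      using gm by (intro nn_integral_cmult) measurable
    finally show ?thesis .
  qed
  have hiLp: "in_Lp q0 hi" unfolding in_Lp_def
  proof (intro conjI him)
    have "(\<integral>\<^sup>+x. ennreal (norm (cmod (hi x) powr q0)) \<partial>lebesgue) = ennreal (s powr q0) * (\<integral>\<^sup>+x. ennreal ((cmod (hi x) / s) powr q0) \<partial>lebesgue)"
      using scale[OF him] by simp
    also have "\<dots> \<le> ennreal (s powr q0) * ennreal ((2 powr q0 / F) / (1 - r0))"
      by (intro mult_left_mono IH) auto
    also have "\<dots> < \<infinity>" by (simp add: ennreal_mult_less_top)
    finally show "integrable lebesgue (\<lambda>x. cmod (hi x) powr q0)"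
      using him by (subst integrable_iff_bounded) auto
  qed
  have loLp: "in_Lp q1 lo" unfolding in_Lp_def
  proof (intro conjI lom)
    have "(\<integral>\<^sup>+x. ennreal (norm (cmod (lo x) powr q1)) \<partial>lebesgue) = ennreal (s powr q1) * (\<integral>\<^sup>+x. ennreal ((cmod (lo x) / s) powr q1) \<partial>lebesgue)"
      using scale[OF lom] by simp
    also have "\<dots> \<le> ennreal (s powr q1) * ennreal ((D / F) / (1 - r1))"
      by (intro mult_left_mono IL) auto
    also have "\<dots> < \<infinity>" by (simp add: ennreal_mult_less_top)
    finally show "integrable lebesgue (\<lambda>x. cmod (lo x) powr q1)"
      using lom by (subst integrable_iff_bounded) auto
  qed
  have Thim: "T hi \<in> borel_measurable lebesgue" using hT0[OF hiLp] by (simp add: in_Lp_def)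
  have Tlom: "T lo \<in> borel_measurable lebesgue" using hT1[OF loLp] by (simp add: in_Lp_def)
  have muhi: "emeasure lebesgue {x. s < cmod (T hi x)} \<le> ennreal C0 * ennreal ((2 powr q0 / F) / (1 - r0))"
  proof -
    have "emeasure lebesgue {x. s < cmod (T hi x)} \<le> (\<integral>\<^sup>+x. ennreal (1 * (cmod (T hi x) / s) powr q0) \<partial>lebesgue)"
      using Thim s q0 by (intro chebyshev_pow) auto
    also have "\<dots> \<le> ennreal C0 * (\<integral>\<^sup>+x. ennreal (1 * (cmod (hi x) / s) powr q0) \<partial>lebesgue)"
      using s by (intro opbound[OF hT0 hiLp C0]) auto
    also have "\<dots> \<le> ennreal C0 * ennreal ((2 powr q0 / F) / (1 - r0))"
      using IH by (intro mult_left_mono) auto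
    finally show ?thesis .
  qed
  have mulo: "emeasure lebesgue {x. s < cmod (T lo x)} \<le> ennreal C1 * ennreal ((D / F) / (1 - r1))"
  proof -
    have "emeasure lebesgue {x. s < cmod (T lo x)} \<le> (\<integral>\<^sup>+x. ennreal (1 * (cmod (T lo x) / s) powr q1) \<partial>lebesgue)"
      using Tlom s q1 by (intro chebyshev_pow) auto
    also have "\<dots> \<le> ennreal C1 * (\<integral>\<^sup>+x. ennreal (1 * (cmod (lo x) / s) powr q1) \<partial>lebesgue)"
      using s by (intro opbound[OF hT1 loLp C1]) auto
    also have "\<dots> \<le> ennreal C1 * ennreal ((D / F) / (1 - r1))"
      using IL by (intro mult_left_mono) auto
    finally show ?thesis .
  qed
  have split: "(\<lambda>y. hi y + lo y) = f" by (auto simp: hi_def lo_def)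
  have AEs: "AE x in lebesgue. T f x = T hi x + T lo x"
    using hadd[OF hiLp loLp] by (simp add: split)
  have "distrib_fun (T f) (2 * s) \<le> emeasure lebesgue ({x. s < cmod (T hi x)} \<union> {x. s < cmod (T lo x)})"
    unfolding distrib_fun_def
  proof (rule emeasure_mono_AE)
    show "AE x in lebesgue. x \<in> {x. cmod (T f x) > 2 * s} \<longrightarrow> x \<in> {x. s < cmod (T hi x)} \<union> {x. s < cmod (T lo x)}"
      using AEs
    proof eventually_elim
      case (elim x)
      have "cmod (T f x) \<le> cmod (T hi x) + cmod (T lo x)" using elim by (simp add: norm_triangle_ineq)
      then show ?case by auto
    qed
    show "{x. s < cmod (T hi x)} \<union> {x. s < cmod (T lo x)} \<in> sets lebesgue"
      using meas_gt[OF Thim] meas_gt[OF Tlom] by auto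
  qed
  also have "\<dots> \<le> emeasure lebesgue {x. s < cmod (T hi x)} + emeasure lebesgue {x. s < cmod (T lo x)}"
    using meas_gt[OF Thim] meas_gt[OF Tlom] by (intro emeasure_subadditive) auto
  also have "\<dots> \<le> ennreal C0 * ennreal ((2 powr q0 / F) / (1 - r0)) + ennreal C1 * ennreal ((D / F) / (1 - r1))"
    by (intro add_mono muhi mulo)
  also have "\<dots> = ennreal (C0 * ((2 powr q0 / F) / (1 - r0)) + C1 * ((D / F) / (1 - r1)))"
  proof -
    have n1: "0 \<le> C0 * ((2 powr q0 / F) / (1 - r0))" using C0 B0 by (rule mult_nonneg_nonneg)
    have n2: "0 \<le> C1 * ((D / F) / (1 - r1))" using C1 B1 by (rule mult_nonneg_nonneg)
    show ?thesis using C0 C1 B0 B1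
      by (simp only: ennreal_plus[OF n1 n2] ennreal_mult[symmetric])
  qed
  also have "C0 * ((2 powr q0 / F) / (1 - r0)) + C1 * ((D / F) / (1 - r1))
      = (C0 * (2 powr q0 / (1 - 2 powr (q0 - p))) + C1 * (D / (1 - D * 2 powr (- q1)))) / \<phi> (s/l)"
  proof -
    have "1 - r0 \<noteq> 0" "1 - r1 \<noteq> 0" "F \<noteq> 0" using r0 r1 F by auto
    then have "C0 * ((2 powr q0 / F) / (1 - r0)) + C1 * ((D / F) / (1 - r1))
        = (C0 * (2 powr q0 / (1 - r0)) + C1 * (D / (1 - r1))) / F"
      by (simp add: add_divide_distrib divide_divide_eq_left ac_simps)
    then show ?thesis by (simp add: F_def r0_def r1_def)
  qed
  finally show ?thesis .
qed

lemma Phi_shrink: "t \<ge> 0 \<Longrightarrow> K \<ge> 1 \<Longrightarrow> \<Phi> (t / K) \<le> ennreal (1/K) * \<Phi> t"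
proof -
  assume t: "t \<ge> 0" and K: "K \<ge> 1"
  have "\<Phi> ((1/K) * t) \<le> ennreal ((1/K) powr p) * \<Phi> t" using t K by (intro lam) auto
  also have "(1/K) powr p \<le> (1/K) powr 1" using K p1 by (intro powr_mono') auto
  then have "ennreal ((1/K) powr p) * \<Phi> t \<le> ennreal (1/K) * \<Phi> t"
    using K by (intro mult_right_mono ennreal_leI) auto
  finally show ?thesis by simp
qed

end


theorem mainTheorem3:
  fixes \<Phi> :: "real \<Rightarrow> ennreal"
    and A :: "real^'n^'n"
    and a :: "(real^'n) \<times> (real^'n) \<Rightarrow> complex"
    and T :: "(real^'n \<Rightarrow> complex) \<Rightarrow> (real^'n \<Rightarrow> complex)"
  assumes "strict_young \<Phi>"
    and "invertible A"
    and "a \<in> symbol_S0"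
    and "is_Op_extension A a T"
  shows "(\<exists>C::real. \<forall>f\<in>orlicz_space \<Phi>. orlicz_norm \<Phi> (T f) \<le> ennreal C * orlicz_norm \<Phi> f)
       \<and> (\<exists>C::real. \<forall>f\<in>weak_orlicz_space \<Phi>.
            weak_orlicz_norm \<Phi> (T f) \<le> ennreal C * weak_orlicz_norm \<Phi> f)"
proof -
  have sy: "young_fun \<Phi>" "\<And>t. t \<ge> 0 \<Longrightarrow> \<Phi> t < \<infinity>" "delta2_cond \<Phi>" "lambda_cond \<Phi>"
    using assms(1) by (auto simp: strict_young_def)
  obtain p where p: "p > 1" and lam: "\<And>t c. t \<ge> 0 \<Longrightarrow> 0 < c \<Longrightarrow> c \<le> 1 \<Longrightarrow> \<Phi> (c*t) \<le> ennreal (c powr p) * \<Phi> t"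
    using sy(4) unfolding lambda_cond_def by blast
  obtain D where D: "D \<ge> 1" and dl: "\<And>t. t \<ge> 0 \<Longrightarrow> \<Phi> (2*t) \<le> ennreal D * \<Phi> t"
    using sy(3) unfolding delta2_cond_def by blast
  interpret Y: yctx \<Phi> p D
    using p D lam dl sy(1,2) unfolding young_fun_def by unfold_locales auto
  define q0 where "q0 = (1 + p) / 2"
  define q1 where "q1 = log 2 (4 * D)"
  have q0: "1 < q0" "q0 < p" using p by (auto simp: q0_def)
  have 2: "2 powr q1 = 4 * D" using D by (simp add: q1_def)
  have q1: "1 < q1" using D by (simp add: q1_def less_log_iff)
  have q1r: "D * 2 powr (- q1) < 1" using D 2 by (simp add: powr_minus)
  have extP: "\<forall>P>1. \<exists>C. \<forall>f. in_Lp P f \<longrightarrow> in_Lp P (T f) \<and>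
          (\<integral>x. cmod (T f x) powr P \<partial>lebesgue) \<le> C * (\<integral>x. cmod (f x) powr P \<partial>lebesgue)"
    and hadd0: "\<And>P Q f g. 1 < P \<Longrightarrow> 1 < Q \<Longrightarrow> in_Lp P f \<Longrightarrow> in_Lp Q g \<Longrightarrow>
          (AE x in lebesgue. T (\<lambda>y. f y + g y) x = T f x + T g x)"
    using assms(4) unfolding is_Op_extension_def by blast+
  have getC: "\<exists>C\<ge>0. \<forall>f. in_Lp P f \<longrightarrow> in_Lp P (T f) \<and>
          (\<integral>x. cmod (T f x) powr P \<partial>lebesgue) \<le> C * (\<integral>x. cmod (f x) powr P \<partial>lebesgue)" if P: "P > 1" for P
  proof -
    obtain C where C: "\<And>f. in_Lp P f \<Longrightarrow> in_Lp P (T f) \<and>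
          (\<integral>x. cmod (T f x) powr P \<partial>lebesgue) \<le> C * (\<integral>x. cmod (f x) powr P \<partial>lebesgue)"
      using extP P by blast
    show ?thesis
    proof (intro exI[of _ "max C 0"] conjI allI impI)
      fix f :: "real^'n \<Rightarrow> complex" assume f: "in_Lp P f"
      show "in_Lp P (T f)" using C[OF f] by blast
      have "0 \<le> (\<integral>x. cmod (f x) powr P \<partial>lebesgue)" by simp
      then have "C * (\<integral>x. cmod (f x) powr P \<partial>lebesgue) \<le> max C 0 * (\<integral>x. cmod (f x) powr P \<partial>lebesgue)"
        by (intro mult_right_mono) auto
      then show "(\<integral>x. cmod (T f x) powr P \<partial>lebesgue) \<le> max C 0 * (\<integral>x. cmod (f x) powr P \<partial>lebesgue)"
        using C[OF f] by linarith
    qed simp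
  qed
  obtain C0 where C0: "C0 \<ge> 0" and hT0: "\<And>g. in_Lp q0 g \<Longrightarrow> in_Lp q0 (T g) \<and> (\<integral>x. cmod (T g x) powr q0 \<partial>lebesgue) \<le> C0 * (\<integral>x. cmod (g x) powr q0 \<partial>lebesgue)"
    using getC[OF q0(1)] by blast
  obtain C1 where C1: "C1 \<ge> 0" and hT1: "\<And>g. in_Lp q1 g \<Longrightarrow> in_Lp q1 (T g) \<and> (\<integral>x. cmod (T g x) powr q1 \<partial>lebesgue) \<le> C1 * (\<integral>x. cmod (g x) powr q1 \<partial>lebesgue)"
    using getC[OF q1] by blast
  have hadd: "\<And>g h. in_Lp q0 g \<Longrightarrow> in_Lp q1 h \<Longrightarrow> AE x in lebesgue. T (\<lambda>y. g y + h y) x = T g x + T h x"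
    using hadd0 q0 q1 by blast
  define E where "E = C0 * (1 / (1 - 2 powr (q0 - p))) + C1 * (D / (1 - D * 2 powr (- q1)))"
  define K where "K = max 1 E"
  have K: "K \<ge> 1" "E \<le> K" by (auto simp: K_def)
  define Ew where "Ew = C0 * (2 powr q0 / (1 - 2 powr (q0 - p))) + C1 * (D / (1 - D * 2 powr (- q1)))"
  define Kw where "Kw = max 1 Ew"
  have Kw: "Kw \<ge> 1" "Ew \<le> Kw" by (auto simp: Kw_def)
  have part1: "\<forall>f\<in>orlicz_space \<Phi>. orlicz_norm \<Phi> (T f) \<le> ennreal (4 * K) * orlicz_norm \<Phi> f"
  proof
    fix f :: "real^'n \<Rightarrow> complex" assume "f \<in> orlicz_space \<Phi>"
    then have fm: "f \<in> borel_measurable lebesgue" by (simp add: orlicz_space_def)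
    show "orlicz_norm \<Phi> (T f) \<le> ennreal (4 * K) * orlicz_norm \<Phi> f"
      unfolding orlicz_norm_def
    proof (rule Inf_scale)
      show "0 < 4 * K" using K by simp
    next
      fix l :: real assume l: "l > 0" and fi: "(\<integral>\<^sup>+x. \<Phi> (cmod (f x) / l) \<partial>lebesgue) \<le> 1"
      have core: "(\<exists>g\<in>borel_measurable lebesgue. AE x in lebesgue. T f x = g x) \<and>
          (\<integral>\<^sup>+x. \<Phi> (cmod (T f x) / (4*l)) \<partial>lebesgue) \<le> ennreal E"
        unfolding E_def by (rule Y.orlicz_core[OF q0 q1 q1r C0 C1 hT0 hT1 hadd fm l fi])
      then obtain g where gm: "g \<in> borel_measurable lebesgue" and ae: "AE x in lebesgue. T f x = g x"
        and ci: "(\<integral>\<^sup>+x. \<Phi> (cmod (T f x) / (4*l)) \<partial>lebesgue) \<le> ennreal E" by blast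
      have gmeas: "(\<lambda>x. \<Phi> (cmod (g x) / (4*l))) \<in> borel_measurable lebesgue"
      proof -
        have m: "(\<lambda>x. cmod (g x) / (4*l)) \<in> borel_measurable lebesgue" using gm by measurable
        have "(\<lambda>x. ennreal (Y.\<phi> (cmod (g x) / (4*l)))) \<in> borel_measurable lebesgue"
          using Y.phi_meas[OF m] l by simp
        moreover have "(\<lambda>x. \<Phi> (cmod (g x) / (4*l))) = (\<lambda>x. ennreal (Y.\<phi> (cmod (g x) / (4*l))))"
          using l by (intro ext Y.Phi_eq) simp
        ultimately show ?thesis by simp
      qed
      have "(\<integral>\<^sup>+x. \<Phi> (cmod (T f x) / (4 * K * l)) \<partial>lebesgue)
          \<le> (\<integral>\<^sup>+x. ennreal (1/K) * \<Phi> (cmod (T f x) / (4*l)) \<partial>lebesgue)"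
      proof (intro nn_integral_mono)
        fix x
        have "cmod (T f x) / (4 * K * l) = (cmod (T f x) / (4*l)) / K" by simp
        then show "\<Phi> (cmod (T f x) / (4 * K * l)) \<le> ennreal (1/K) * \<Phi> (cmod (T f x) / (4*l))"
          using Y.Phi_shrink[of "cmod (T f x) / (4*l)" K] K l by (simp add: mult.commute mult.left_commute)
      qed
      also have "\<dots> = (\<integral>\<^sup>+x. ennreal (1/K) * \<Phi> (cmod (g x) / (4*l)) \<partial>lebesgue)"
        using ae by (intro nn_integral_cong_AE) auto
      also have "\<dots> = ennreal (1/K) * (\<integral>\<^sup>+x. \<Phi> (cmod (g x) / (4*l)) \<partial>lebesgue)"
        using gmeas by (rule nn_integral_cmult)
      also have "(\<integral>\<^sup>+x. \<Phi> (cmod (g x) / (4*l)) \<partial>lebesgue) = (\<integral>\<^sup>+x. \<Phi> (cmod (T f x) / (4*l)) \<partial>lebesgue)"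
        using ae by (intro nn_integral_cong_AE) auto
      also have "ennreal (1/K) * \<dots> \<le> ennreal (1/K) * ennreal K"
        using ci K by (intro mult_left_mono) (auto intro: order_trans)
      also have "\<dots> = 1" using K by (simp add: ennreal_mult[symmetric])
      finally show "(\<integral>\<^sup>+x. \<Phi> (cmod (T f x) / (4 * K * l)) \<partial>lebesgue) \<le> 1" .
    qed
  qed
  have part2: "\<forall>f\<in>weak_orlicz_space \<Phi>. weak_orlicz_norm \<Phi> (T f) \<le> ennreal (2 * Kw) * weak_orlicz_norm \<Phi> f"
  proof
    fix f :: "real^'n \<Rightarrow> complex" assume "f \<in> weak_orlicz_space \<Phi>"
    then have fm: "f \<in> borel_measurable lebesgue" by (simp add: weak_orlicz_space_def)
    show "weak_orlicz_norm \<Phi> (T f) \<le> ennreal (2 * Kw) * weak_orlicz_norm \<Phi> f"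
      unfolding weak_orlicz_norm_def
    proof (rule Inf_scale)
      show "0 < 2 * Kw" using Kw by simp
    next
      fix l :: real assume l: "l > 0" and fw: "\<forall>t>0. \<Phi> (t / l) * distrib_fun f t \<le> 1"
      show "\<forall>t>0. \<Phi> (t / (2 * Kw * l)) * distrib_fun (T f) t \<le> 1"
      proof (intro allI impI)
        fix t :: real assume t: "t > 0"
        define s where "s = t / 2"
        have s: "s > 0" using t by (simp add: s_def)
        have ts: "t = 2 * s" by (simp add: s_def)
        have F: "Y.\<phi> (s / l) > 0" using s l by (intro Y.phi_pos) simp
        have wc: "distrib_fun (T f) (2 * s) \<le> ennreal (Ew / Y.\<phi> (s/l))"
          unfolding Ew_def using fw
          by (intro Y.weak_core[OF q0 q1 q1r C0 C1 hT0 hT1 hadd fm l _ s]) auto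
        have "t / (2 * Kw * l) = (s / l) / Kw" by (simp add: s_def)
        then have "\<Phi> (t / (2 * Kw * l)) \<le> ennreal (1/Kw) * \<Phi> (s / l)"
          using Y.Phi_shrink[of "s / l" Kw] Kw s l by simp
        also have "\<dots> = ennreal (Y.\<phi> (s / l) / Kw)"
          using Y.Phi_eq[of "s/l"] s l Kw Y.phi_nonneg by (simp add: ennreal_mult[symmetric])
        finally have a: "\<Phi> (t / (2 * Kw * l)) \<le> ennreal (Y.\<phi> (s / l) / Kw)" .
        have "\<Phi> (t / (2 * Kw * l)) * distrib_fun (T f) t \<le> ennreal (Y.\<phi> (s / l) / Kw) * ennreal (Ew / Y.\<phi> (s/l))"
        proof -
          have wc': "distrib_fun (T f) t \<le> ennreal (Ew / Y.\<phi> (s/l))" using wc ts by simp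
          show ?thesis using a wc' by (intro mult_mono) auto
        qed
        also have "\<dots> = ennreal (Y.\<phi> (s / l) / Kw * (Ew / Y.\<phi> (s/l)))"
          using F Kw by (simp add: ennreal_mult'[symmetric])
        also have "Y.\<phi> (s / l) / Kw * (Ew / Y.\<phi> (s/l)) = Ew / Kw" using F by simp
        also have "ennreal (Ew / Kw) \<le> 1" using Kw by (simp add: ennreal_le_1 )
        finally show "\<Phi> (t / (2 * Kw * l)) * distrib_fun (T f) t \<le> 1" .
      qed
    qed
  qed
  from part1 part2 show ?thesis by blast
qed

end
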